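(* Let $d\geq 1$ be an integer and let $\mathbb{C}^{d(d+1)/2}$ denote the complex vector space whose coordinates are indexed by the pairs $(i,j)$ of integers with $0\leq i<j\leq d$. Define $\phi:(\mathbb{C}^\times)^{d+1}\to\mathbb{C}^{d(d+1)/2}$ by \[ \phi(w_0,\dots,w_d)=\left(\frac{w_i}{w_j}+\frac{w_j}{w_i}\right)_{0\leq i<j\leq d}. \] In the polynomial ring $\mathbb{C}[X_{i,j}\mid 0\leq i<j\leq d]$, write $X_{j,i}=X_{i,j}$, and let $I$ be the ideal generated by the polynomials \[ g(X_{i,j},X_{j,k},X_{i,k})\quad\text{for all pairwise distinct } i,j,k\in\{0,\dots,d\}, \] \[ h(X_{i,j},X_{i,k},X_{i,\ell},X_{j,k},X_{j,\ell},X_{k,\ell})\quad\text{for all pairwise distinct } i,j,k,\ell\in\{0,\dots,d\}. \] Then the image of $\phi$ coincides with the set of common zeros of $I$ in $\mathbb{C}^{d(d+1)/2}$.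
   Context: Here $g(X,Y,Z)=X^2+Y^2+Z^2-XYZ-4$ and \[ h(X_{0,1},X_{0,2},X_{0,3},X_{1,2},X_{1,3},X_{2,3})=\det\begin{bmatrix}2&X_{0,1}&X_{0,2}\\ X_{0,1}&2&X_{1,2}\\ X_{0,3}&X_{1,3}&X_{2,3}\end{bmatrix}. \] *)

theory Defs
  imports Complex_Main
begin

definition g :: "complex \<Rightarrow> complex \<Rightarrow> complex \<Rightarrow> complex" where
  "g X Y Z = X^2 + Y^2 + Z^2 - X*Y*Z - 4"

text \<open>The determinant of the 3x3 matrix with rows (2, X01, X02), (X01, 2, X12), (X03, X13, X23),
  expanded along the first row.\<close>
definition h :: "complex \<Rightarrow> complex \<Rightarrow> complex \<Rightarrow> complex \<Rightarrow> complex \<Rightarrow> complex \<Rightarrow> complex" where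
  "h X01 X02 X03 X12 X13 X23 =
     2 * (2 * X23 - X12 * X13) - X01 * (X01 * X23 - X12 * X03) + X02 * (X01 * X13 - 2 * X03)"

definition coord_space :: "nat \<Rightarrow> (nat \<Rightarrow> nat \<Rightarrow> complex) set" where
  "coord_space d = {x. \<forall>i j. \<not> (i < j \<and> j \<le> d) \<longrightarrow> x i j = 0}"

definition Xs :: "(nat \<Rightarrow> nat \<Rightarrow> complex) \<Rightarrow> nat \<Rightarrow> nat \<Rightarrow> complex" where
  "Xs x i j = (if i < j then x i j else x j i)"

definition phi :: "nat \<Rightarrow> (nat \<Rightarrow> complex) \<Rightarrow> (nat \<Rightarrow> nat \<Rightarrow> complex)" where
  "phi d w = (\<lambda>i j. if i < j \<and> j \<le> d then w i / w j + w j / w i else 0)"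

definition torus :: "nat \<Rightarrow> (nat \<Rightarrow> complex) set" where
  "torus d = {w. (\<forall>i\<le>d. w i \<noteq> 0) \<and> (\<forall>i>d. w i = 0)}"

text \<open>Common zeros of the ideal I = common zeros of its generators.\<close>
definition zero_set_I :: "nat \<Rightarrow> (nat \<Rightarrow> nat \<Rightarrow> complex) set" where
  "zero_set_I d = {x \<in> coord_space d.
     (\<forall>i j k. i \<le> d \<and> j \<le> d \<and> k \<le> d \<and> i \<noteq> j \<and> i \<noteq> k \<and> j \<noteq> k \<longrightarrow>
        g (Xs x i j) (Xs x j k) (Xs x i k) = 0) \<and>
     (\<forall>i j k l. i \<le> d \<and> j \<le> d \<and> k \<le> d \<and> l \<le> d \<and> i \<noteq> j \<and> i \<noteq> k \<and> i \<noteq> l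
        \<and> j \<noteq> k \<and> j \<noteq> l \<and> k \<noteq> l \<longrightarrow>
        h (Xs x i j) (Xs x i k) (Xs x i l) (Xs x j k) (Xs x j l) (Xs x k l) = 0)}"

end

theory Submission
  imports Defs
begin

lemma Xs_sym: "Xs x a b = Xs x b a" if "a \<noteq> b"
  using that by (auto simp: Xs_def)

lemma g_fwd:
  fixes a b c :: complex
  assumes "a \<noteq> 0" "b \<noteq> 0" "c \<noteq> 0"
  shows "g (a/b+b/a) (b/c+c/b) (a/c+c/a) = 0"
  using assms unfolding g_def by (simp add: field_simps) algebra

lemma h_fwd:
  fixes a b c e :: complex
  assumes "a \<noteq> 0" "b \<noteq> 0" "c \<noteq> 0" "e \<noteq> 0"
  shows "h (a/b+b/a) (a/c+c/a) (a/e+e/a) (b/c+c/b) (b/e+e/b) (c/e+e/c) = 0"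
  using assms unfolding h_def by (simp add: field_simps)

lemma g_back:
  fixes u v Y :: complex
  assumes "u \<noteq> 0" "v \<noteq> 0" "g (u+1/u) Y (v+1/v) = 0"
  shows "Y = u/v+v/u \<or> Y = u/(1/v)+(1/v)/u"
proof -
  have "(Y - (u/v+v/u)) * (Y - (u/(1/v)+(1/v)/u)) = g (u+1/u) Y (v+1/v)"
    using assms(1,2) unfolding g_def by (simp add: field_simps) algebra
  then show ?thesis using assms(3) by simp
qed

lemma h_back:
  fixes u v t Y :: complex
  assumes "u \<noteq> 0" "v \<noteq> 0" "t \<noteq> 0" "u^2 \<noteq> 1"
    "h (u+1/u) (v+1/v) (t+1/t) (u/v+v/u) (u/t+t/u) Y = 0"
  shows "Y = v/t+t/v"
proof -
  have "h (u+1/u) (v+1/v) (t+1/t) (u/v+v/u) (u/t+t/u) Y = (- ((u-1/u)^2)) * (Y - (v/t+t/v))"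
    using assms(1-3) unfolding h_def by (simp add: field_simps) algebra
  moreover have "u - 1/u \<noteq> 0"
  proof
    assume "u - 1/u = 0"
    then have "u*u = 1" using assms(1) by (simp add: field_simps)
    then show False using assms(4) by (simp add: power2_eq_square)
  qed
  ultimately show ?thesis using assms(5) by simp
qed

lemma root_ex: "\<exists>t::complex. t \<noteq> 0 \<and> t + 1/t = X"
proof -
  define s where "s = csqrt (X^2 - 4)"
  have s2: "s^2 = X^2 - 4" unfolding s_def by simp
  define t where "t = (X + s)/2"
  have eq: "t*t - X*t + 1 = 0" unfolding t_def using s2
    by (simp add: field_simps power2_eq_square) algebra
  have "t \<noteq> 0" using eq by auto
  moreover have "t + 1/t = X" using eq \<open>t \<noteq> 0\<close> by (simp add: field_simps)
  ultimately show ?thesis by blast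
qed

lemma Xs_phi: "a \<noteq> b \<Longrightarrow> a \<le> d \<Longrightarrow> b \<le> d \<Longrightarrow> Xs (phi d w) a b = w a/w b + w b/w a"
  by (auto simp: Xs_def phi_def add.commute)

lemma image_sub: "phi d ` torus d \<subseteq> zero_set_I d"
proof
  fix x assume "x \<in> phi d ` torus d"
  then obtain w where w: "w \<in> torus d" and x: "x = phi d w" by blast
  have nz: "\<And>i. i \<le> d \<Longrightarrow> w i \<noteq> 0" using w by (auto simp: torus_def)
  show "x \<in> zero_set_I d"
    unfolding zero_set_I_def
  proof (intro CollectI conjI allI impI)
    show "x \<in> coord_space d" unfolding x coord_space_def phi_def by auto
  next
    fix i j k assume a: "i \<le> d \<and> j \<le> d \<and> k \<le> d \<and> i \<noteq> j \<and> i \<noteq> k \<and> j \<noteq> k"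
    then show "g (Xs x i j) (Xs x j k) (Xs x i k) = 0"
      unfolding x using Xs_phi g_fwd nz by simp
  next
    fix i j k l assume a: "i \<le> d \<and> j \<le> d \<and> k \<le> d \<and> l \<le> d \<and> i \<noteq> j \<and> i \<noteq> k \<and> i \<noteq> l
        \<and> j \<noteq> k \<and> j \<noteq> l \<and> k \<noteq> l"
    then show "h (Xs x i j) (Xs x i k) (Xs x i l) (Xs x j k) (Xs x j l) (Xs x k l) = 0"
      unfolding x using Xs_phi h_fwd nz by simp
  qed
qed

lemma from_Xs:
  assumes x: "x \<in> coord_space d"
    and w: "w \<in> torus d"
    and e: "\<And>a b. a \<noteq> b \<Longrightarrow> a \<le> d \<Longrightarrow> b \<le> d \<Longrightarrow> Xs x a b = w a/w b + w b/w a"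
  shows "x \<in> phi d ` torus d"
proof
  show "x = phi d w"
  proof (intro ext)
    fix i j show "x i j = phi d w i j"
    proof (cases "i < j \<and> j \<le> d")
      case True
      then have "Xs x i j = x i j" by (simp add: Xs_def)
      then show ?thesis using e[of i j] True by (simp add: phi_def)
    next
      case False
      then show ?thesis using x by (auto simp: coord_space_def phi_def)
    qed
  qed
qed (rule w)

lemma sub_image:
  assumes "d \<ge> 1"
  shows "zero_set_I d \<subseteq> phi d ` torus d"
proof
  fix x assume xz: "x \<in> zero_set_I d"
  have xc: "x \<in> coord_space d" using xz by (simp add: zero_set_I_def)
  have G: "\<And>i j k. i \<le> d \<Longrightarrow> j \<le> d \<Longrightarrow> k \<le> d \<Longrightarrow> i \<noteq> j \<Longrightarrow> i \<noteq> k \<Longrightarrow> j \<noteq> k \<Longrightarrow>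
        g (Xs x i j) (Xs x j k) (Xs x i k) = 0" using xz by (simp add: zero_set_I_def)
  have H: "\<And>i j k l. i \<le> d \<Longrightarrow> j \<le> d \<Longrightarrow> k \<le> d \<Longrightarrow> l \<le> d \<Longrightarrow> i \<noteq> j \<Longrightarrow> i \<noteq> k \<Longrightarrow> i \<noteq> l
        \<Longrightarrow> j \<noteq> k \<Longrightarrow> j \<noteq> l \<Longrightarrow> k \<noteq> l \<Longrightarrow>
        h (Xs x i j) (Xs x i k) (Xs x i l) (Xs x j k) (Xs x j l) (Xs x k l) = 0"
    using xz by (simp add: zero_set_I_def)
  have "\<forall>j. \<exists>t. t \<noteq> 0 \<and> t + 1/t = Xs x 0 j" using root_ex by blast
  then obtain r where r: "\<And>j. r j \<noteq> 0" "\<And>j. r j + 1/r j = Xs x 0 j" by metis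
  show "x \<in> phi d ` torus d"
  proof (cases "\<exists>m. 1 \<le> m \<and> m \<le> d \<and> (r m)^2 \<noteq> 1")
    case True
    then obtain m where m: "1 \<le> m" "m \<le> d" "(r m)^2 \<noteq> 1" by blast
    define w where "w k = (if k = 0 then 1 else if k > d then 0 else if k = m then r m
        else if Xs x m k = r m / r k + r k / r m then r k else 1 / r k)" for k
    have wt: "w \<in> torus d" unfolding torus_def w_def using r(1) by auto
    have wnz: "\<And>k. k \<le> d \<Longrightarrow> w k \<noteq> 0" using wt by (simp add: torus_def)
    have w0: "\<And>k. 1 \<le> k \<Longrightarrow> k \<le> d \<Longrightarrow> w k + 1 / w k = Xs x 0 k"
    proof -
      fix k :: nat assume "1 \<le> k" "k \<le> d"
      then show "w k + 1 / w k = Xs x 0 k" using r[of k] unfolding w_def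
        by (auto simp: add.commute)
    qed
    have wm: "w m = r m" using m unfolding w_def by auto
    have Xm: "Xs x m k = w m / w k + w k / w m" if k: "k \<le> d" "k \<noteq> 0" "k \<noteq> m" for k
    proof -
      have "g (Xs x 0 m) (Xs x m k) (Xs x 0 k) = 0" using G[of 0 m k] k m by simp
      then have "g (r m + 1/r m) (Xs x m k) (r k + 1/r k) = 0" using r by simp
      then have "Xs x m k = r m/r k+r k/r m \<or> Xs x m k = r m/(1/r k)+(1/r k)/r m"
        using g_back r(1) by blast
      then show ?thesis using k wm unfolding w_def by auto
    qed
    show ?thesis
    proof (rule from_Xs[OF xc wt])
      fix a b assume ab: "a \<noteq> b" "a \<le> d" "b \<le> d"
      show "Xs x a b = w a / w b + w b / w a"
      proof -
        consider "a = 0" | "b = 0" | "a = m" "b \<noteq> 0" | "b = m" "a \<noteq> 0" | "a \<noteq> 0" "b \<noteq> 0" "a \<noteq> m" "b \<noteq> m" by blast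
        then show ?thesis
        proof cases
          case 1 then show ?thesis using w0[of b] ab by (simp add: w_def add.commute)
        next
          case 2 then show ?thesis using w0[of a] ab Xs_sym[of a b x] by (simp add: w_def)
        next
          case 3 then show ?thesis using Xm[of b] ab by simp
        next
          case 4 then show ?thesis using Xm[of a] ab Xs_sym[of a b x] by (simp add: add.commute)
        next
          case 5
          have "h (Xs x 0 m) (Xs x 0 a) (Xs x 0 b) (Xs x m a) (Xs x m b) (Xs x a b) = 0"
            using H[of 0 m a b] 5 ab m by simp
          then have "h (w m + 1/w m) (w a + 1/w a) (w b + 1/w b) (w m/w a + w a/w m)
              (w m/w b + w b/w m) (Xs x a b) = 0"
            using w0[of m] w0[of a] w0[of b] Xm[of a] Xm[of b] 5 ab m by simp
          moreover have "w m \<noteq> 0" "w a \<noteq> 0" "w b \<noteq> 0" "(w m)^2 \<noteq> 1" using wnz ab m wm by auto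
          ultimately show ?thesis using h_back[of "w m" "w a" "w b" "Xs x a b"] by blast
        qed
      qed
    qed
  next
    case False
    then have r1: "\<And>k. 1 \<le> k \<Longrightarrow> k \<le> d \<Longrightarrow> r k = 1 \<or> r k = -1"
      by (metis power2_eq_1_iff)
    define w where "w k = (if k = 0 then 1 else if k > d then 0 else r k)" for k
    have wt: "w \<in> torus d" unfolding torus_def w_def using r(1) by auto
    show ?thesis
    proof (rule from_Xs[OF xc wt])
      fix a b assume ab: "a \<noteq> b" "a \<le> d" "b \<le> d"
      show "Xs x a b = w a / w b + w b / w a"
      proof -
        consider "a = 0" | "b = 0" | "a \<noteq> 0" "b \<noteq> 0" by blast
        then show ?thesis
        proof cases
          case 1 then show ?thesis using r[of b] ab by (simp add: w_def add.commute)
        next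
          case 2 then show ?thesis using r[of a] ab Xs_sym[of a b x] by (simp add: w_def)
        next
          case 3
          have "g (Xs x 0 a) (Xs x a b) (Xs x 0 b) = 0" using G[of 0 a b] 3 ab by simp
          then have "g (r a + 1/r a) (Xs x a b) (r b + 1/r b) = 0" using r by simp
          then have "Xs x a b = r a/r b+r b/r a \<or> Xs x a b = r a/(1/r b)+(1/r b)/r a"
            using g_back r(1) by blast
          then show ?thesis using r1[of a] r1[of b] 3 ab unfolding w_def by auto
        qed
      qed
    qed
  qed
qed

theorem theorem2p5:
  fixes d :: nat
  assumes "d \<ge> 1"
  shows "phi d ` torus d = zero_set_I d"
  using image_sub sub_image[OF assms] by blast

end
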